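(* For $m\ge1$, $\widetilde G_{m,1}=G_{m,1}=(-1)^{m-1}/m$, and \[ \sum_{m\ge1}\sum_{n\ge1}\widetilde G_{m,n+1}x^my^n=\frac{y\log(1+x)-x\log(1+y)}{\log(1+x)-\log(1+y)}\left(\frac{y\log(1+x)+x\log(1+y)}{xy}-1\right). \] Consequently $\widetilde G_{m,n}=\widetilde G_{n-1,m+1}$ for all $m\ge1$, $n\ge2$.
   Context: The generalized Gregory coefficients $G_{m,n}$ ($m,n\ge0$) are defined by $\sum_{m,n\ge0}G_{m,n}x^my^n=\dfrac{y\log^2(1+x)-x\log^2(1+y)}{\log(1+x)-\log(1+y)}$ as formal power series, where $\log^k u=(\log u)^k$. For $m,n\ge1$ define $\widetilde G_{m,n}=G_{m,n}+\sum_{j=0}^{m-2}G_{n-1,j+2}\,G_{m-j-1,2}$ (the sum is empty for $m=1$, so $\widetilde G_{1,n}=G_{1,n}$). *)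

theory Defs
  imports "HOL-Computational_Algebra.Formal_Power_Series"
begin

text \<open>Bivariate formal power series over the reals are modelled as \<open>real fps fps\<close>:
  the coefficient of \<open>x^m y^n\<close> in \<open>S\<close> is \<open>fps_nth (fps_nth S m) n\<close> (outer variable x, inner variable y).\<close>

definition bvX :: "real fps fps" where
  "bvX = fps_X"

definition bvY :: "real fps fps" where
  "bvY = fps_const fps_X"

definition logX :: "real fps fps" where
  "logX = Abs_fps (\<lambda>m. fps_const (fps_nth (fps_ln 1) m))"

definition logY :: "real fps fps" where
  "logY = fps_const (fps_ln 1)"

text \<open>Exact quotient of formal power series: the unique \<open>h\<close> with \<open>h * b = a\<close>
  (bivariate series over a field form an integral domain, so it is unique when it exists).\<close>
definition bdiv :: "real fps fps \<Rightarrow> real fps fps \<Rightarrow> real fps fps" where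
  "bdiv a b = (THE h. h * b = a)"

definition Gser :: "real fps fps" where
  "Gser = bdiv (bvY * logX ^ 2 - bvX * logY ^ 2) (logX - logY)"

definition G :: "nat \<Rightarrow> nat \<Rightarrow> real" where
  "G m n = fps_nth (fps_nth Gser m) n"

definition Gt :: "nat \<Rightarrow> nat \<Rightarrow> real" where
  "Gt m n = G m n + (\<Sum>j = 0..<m - 1. G (n - 1) (j + 2) * G (m - j - 1) 2)"

end

theory Submission
  imports Defs
begin

unbundle fps_syntax

definition TT :: "real fps fps \<Rightarrow> real fps fps" where
  "TT f = Abs_fps (\<lambda>i. Abs_fps (\<lambda>j. f $ j $ i))"

lemma TT_nth[simp]: "TT f $ i $ j = f $ j $ i"
  by (simp add: TT_def)

lemma TT_TT[simp]: "TT (TT f) = f"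
  by (simp add: fps_eq_iff)

lemma nth2_mult: "((f::real fps fps) * g) $ i $ j = (\<Sum>a=0..i. \<Sum>b=0..j. f$a$b * g$(i-a)$(j-b))"
  by (simp add: fps_mult_nth fps_sum_nth)

lemma TT_mult: "TT (f * g) = TT f * TT g"
proof (rule fps_ext, rule fps_ext)
  fix i j
  show "TT (f * g) $ i $ j = (TT f * TT g) $ i $ j"
    by (simp add: nth2_mult) (rule sum.swap)
qed

lemma TT_add: "TT (f + g) = TT f + TT g"
  by (simp add: fps_eq_iff)

lemma TT_diff: "TT (f - g) = TT f - TT g"
  by (simp add: fps_eq_iff)

lemma TT_one: "TT 1 = 1"
  by (simp add: fps_eq_iff)

lemma TT_X: "TT bvX = bvY"
  by (simp add: fps_eq_iff bvX_def bvY_def fps_X_def)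

lemma TT_Y: "TT bvY = bvX"
  by (simp add: fps_eq_iff bvX_def bvY_def fps_X_def)

lemma TT_logY: "TT logY = logX"
  by (simp add: fps_eq_iff logX_def logY_def)

lemma bdiv_eq:
  assumes "b \<noteq> 0" "h * b = a"
  shows "bdiv a b = h"
  unfolding bdiv_def
proof (rule the_equality)
  show "h * b = a" by fact
  fix h' assume "h' * b = a"
  with assms show "h' = h" by (metis mult_right_cancel)
qed

definition ln1 :: "real fps" where "ln1 = fps_ln 1"
definition l1 :: "real fps" where "l1 = Abs_fps (\<lambda>j. ln1 $ (j+1))"
definition M1 :: "real fps fps" where "M1 = fps_const l1"
definition L1 :: "real fps fps" where "L1 = TT M1"
definition VV :: "real fps fps" where "VV = Abs_fps (\<lambda>i. Abs_fps (\<lambda>j. ln1 $ (i+j+2)))"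

lemma ln1_0[simp]: "ln1 $ 0 = 0" by (simp add: ln1_def fps_ln_nth)
lemma ln1_1[simp]: "ln1 $ Suc 0 = 1" by (simp add: ln1_def fps_ln_nth)
lemma l1_0[simp]: "l1 $ 0 = 1" by (simp add: l1_def)

lemma ln1_eq: "ln1 = fps_X * l1"
  by (rule fps_ext) (simp add: l1_def)

lemma logY_eq: "logY = bvY * M1"
  by (simp add: logY_def bvY_def M1_def ln1_eq[symmetric] ln1_def)

lemma logX_eq: "logX = bvX * L1"
  by (simp add: TT_logY[symmetric] logY_eq TT_mult TT_Y L1_def)

lemma Y_nth: "(bvY * f) $ i = fps_X * (f $ i)"
  by (simp add: bvY_def)

lemma X_nth: "(bvX * f) $ i = (if i = 0 then 0 else f $ (i - 1))"
  by (simp add: bvX_def)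

lemma KK: "L1 - M1 = (bvX - bvY) * VV"
proof (rule fps_ext, rule fps_ext)
  fix i j
  show "(L1 - M1) $ i $ j = ((bvX - bvY) * VV) $ i $ j"
    unfolding left_diff_distrib fps_sub_nth X_nth Y_nth
    by (cases i; cases j) (simp_all add: L1_def M1_def l1_def VV_def)
qed

definition UU :: "real fps fps" where "UU = bvX * VV + M1"
definition Ui :: "real fps fps" where "Ui = (SOME g. 1 = UU * g)"
definition PP :: "real fps fps" where "PP = bvX * (bvY * (VV * Ui))"

lemma LM_eq: "logX - logY = (bvX - bvY) * UU"
proof -
  have h: "L1 = M1 + (bvX - bvY) * VV" using KK by (simp add: algebra_simps)
  show ?thesis unfolding logX_eq logY_eq UU_def h by (simp add: algebra_simps)
qed

lemma UU_inv: "UU * Ui = 1"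
proof -
  have "UU $ 0 = l1" by (simp add: UU_def bvX_def M1_def)
  then have "UU $ 0 dvd 1" by simp
  then obtain k where "1 = UU $ 0 * k" by (elim dvdE)
  then have "\<exists>g. 1 = UU * g" using fps_is_left_unit_iff_zeroth_is_left_unit by blast
  then have "1 = UU * Ui" unfolding Ui_def by (rule someI_ex)
  then show ?thesis by simp
qed

lemma LM_nz: "logX - logY \<noteq> 0"
proof
  assume "logX - logY = 0"
  then have "(logX - logY) $ 0 $ 1 = 0" by simp
  then show False by (simp add: logX_def logY_def fps_ln_nth)
qed

lemma PP_eq: "PP * (logX - logY) = bvY * logX - bvX * logY"
proof -
  have "PP * (logX - logY) = bvX * bvY * VV * (bvX - bvY) * (UU * Ui)"
    by (simp add: PP_def LM_eq algebra_simps)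
  also have "\<dots> = bvX * bvY * (bvX - bvY) * VV" by (simp add: UU_inv algebra_simps)
  also have "\<dots> = bvX * bvY * (L1 - M1)" by (simp add: KK algebra_simps)
  also have "\<dots> = bvY * logX - bvX * logY" by (simp add: logX_eq logY_eq algebra_simps)
  finally show ?thesis .
qed

lemma TT_logX: "TT logX = logY"
  by (simp flip: TT_logY)

lemma Gser1: "Gser = bvY * logX + logY * PP"
  unfolding Gser_def
proof (rule bdiv_eq[OF LM_nz])
  have "(bvY * logX + logY * PP) * (logX - logY) = bvY * logX * (logX - logY) + logY * (PP * (logX - logY))"
    by (simp add: algebra_simps)
  also have "\<dots> = bvY * logX * (logX - logY) + logY * (bvY * logX - bvX * logY)" by (simp add: PP_eq)
  also have "\<dots> = bvY * logX ^ 2 - bvX * logY ^ 2" by (simp add: algebra_simps power2_eq_square)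
  finally show "(bvY * logX + logY * PP) * (logX - logY) = bvY * logX ^ 2 - bvX * logY ^ 2" .
qed

lemma Gser2: "Gser = bvX * logY + logX * PP"
  unfolding Gser_def
proof (rule bdiv_eq[OF LM_nz])
  have "(bvX * logY + logX * PP) * (logX - logY) = bvX * logY * (logX - logY) + logX * (PP * (logX - logY))"
    by (simp add: algebra_simps)
  also have "\<dots> = bvX * logY * (logX - logY) + logX * (bvY * logX - bvX * logY)" by (simp add: PP_eq)
  also have "\<dots> = bvY * logX ^ 2 - bvX * logY ^ 2" by (simp add: algebra_simps power2_eq_square)
  finally show "(bvX * logY + logX * PP) * (logX - logY) = bvY * logX ^ 2 - bvX * logY ^ 2" .
qed

lemma TT_PP: "TT PP = PP"
proof -
  have "TT (PP * (logX - logY)) = TT (bvY * logX - bvX * logY)" by (simp add: PP_eq)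
  then have h: "TT PP * (logY - logX) = bvX * logY - bvY * logX"
    by (simp add: TT_mult TT_diff TT_X TT_Y TT_logY TT_logX)
  have "TT PP * (logX - logY) = - (TT PP * (logY - logX))" by (simp add: algebra_simps)
  also have "\<dots> = PP * (logX - logY)" unfolding h PP_eq by simp
  finally show ?thesis using LM_nz by simp
qed

lemma TT_G: "TT Gser = Gser"
proof -
  have "TT Gser = bvX * logY + logX * PP"
    by (simp add: Gser1 TT_add TT_mult TT_X TT_Y TT_logX TT_logY TT_PP)
  then show ?thesis by (simp add: Gser2)
qed

lemma G_sym: "G m n = G n m"
proof -
  have "TT Gser $ n $ m = Gser $ n $ m" by (simp add: TT_G)
  then show ?thesis by (simp add: G_def)
qed

lemma PP_0[simp]: "PP $ 0 = 0" by (simp add: PP_def bvX_def)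
lemma PP_0'[simp]: "PP $ m $ 0 = 0"
proof -
  have h: "PP = bvY * (bvX * (VV * Ui))" by (simp add: PP_def algebra_simps)
  show ?thesis by (subst h) (simp add: Y_nth)
qed

lemma G0: "G 0 n = 0"
proof -
  have h: "Gser = bvX * (logY + L1 * PP)" by (simp add: Gser2 logX_eq algebra_simps)
  show ?thesis unfolding G_def h by (simp add: bvX_def)
qed

lemma G1: "G m (Suc 0) = ln1 $ m"
proof -
  have h: "Gser = bvY * (bvX * L1 + M1 * PP)" by (simp add: Gser1 logX_eq logY_eq algebra_simps)
  have "G m (Suc 0) = (bvX * L1 + M1 * PP) $ m $ 0" unfolding G_def h Y_nth by simp
  also have "\<dots> = ln1 $ m"
    by (cases m) (simp_all add: X_nth M1_def L1_def l1_def bvX_def)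
  finally show ?thesis .
qed

definition p1 :: "real fps" where "p1 = PP $ 1"
definition g2b :: "real fps fps" where "g2b = TT (fps_const p1)"

lemma logX_0[simp]: "logX $ 0 = 0" by (simp add: logX_def fps_ln_nth)
lemma logX_1[simp]: "logX $ Suc 0 = 1" by (simp add: logX_def fps_ln_nth)
lemma logY_0[simp]: "logY $ 0 = ln1" by (simp add: logY_def ln1_def)

lemma p1_eq: "p1 * l1 = l1 - 1"
proof -
  have "(PP * (logX - logY)) $ 1 = (bvY * logX - bvX * logY) $ 1" by (simp add: PP_eq)
  then have "- (p1 * ln1) = fps_X - ln1"
    by (simp add: p1_def bvX_def bvY_def logY_def ln1_def)
  then have "fps_X * (p1 * l1) = fps_X * (l1 - 1)"
    by (simp add: ln1_eq algebra_simps)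
  then show ?thesis by simp
qed

lemma L1_0[simp]: "L1 $ 0 = 1"
  by (rule fps_ext) (simp add: L1_def M1_def)

lemma L1PP: "(L1 * PP) $ i $ n = (if i = 0 then 0 else G n (i + 1))"
proof (cases i)
  case 0 then show ?thesis by simp
next
  case (Suc k)
  have h: "Gser = bvX * (logY + L1 * PP)" by (simp add: Gser2 logX_eq algebra_simps)
  have "G (i + 1) n = (logY + L1 * PP) $ i $ n" unfolding G_def h by (simp add: bvX_def)
  also have "\<dots> = (L1 * PP) $ i $ n" using Suc by (simp add: logY_def)
  finally show ?thesis using Suc G_sym by simp
qed

lemma p1_nth: "p1 $ k = G k 2"
proof -
  have "p1 = (L1 * PP) $ 1" by (simp add: p1_def)
  then have "p1 $ k = (L1 * PP) $ 1 $ k" by simp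
  also have "\<dots> = G k 2" by (simp only: L1PP) (simp add: numeral_2_eq_2)
  finally show ?thesis .
qed

lemma g2b_nth: "g2b $ k = fps_const (p1 $ k)"
  by (rule fps_ext) (simp add: g2b_def)

lemma g2b_L1: "g2b * L1 = L1 - 1"
proof -
  have "g2b * L1 = TT (fps_const p1 * M1)" by (simp add: g2b_def L1_def TT_mult)
  also have "fps_const p1 * M1 = M1 - 1" by (simp add: M1_def p1_eq flip: fps_const_sub)
  finally show ?thesis by (simp add: TT_diff TT_one L1_def)
qed

lemma M1PP: "(M1 * PP) $ m $ n = (if 1 \<le> m \<and> 1 \<le> n then G m (n + 1) else 0)"
proof -
  have h: "Gser = bvY * (bvX * L1 + M1 * PP)" by (simp add: Gser1 logX_eq logY_eq algebra_simps)
  have "G m (Suc n) = (bvX * L1 + M1 * PP) $ m $ n" unfolding G_def h Y_nth by simp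
  moreover have "1 \<le> n \<Longrightarrow> (bvX * L1) $ m $ n = 0"
    by (simp add: X_nth L1_def M1_def)
  moreover have "(M1 * PP) $ 0 = 0" by simp
  moreover have "(M1 * PP) $ m $ 0 = 0" by (simp add: M1_def)
  ultimately show ?thesis by (cases "m = 0"; cases "n = 0") auto
qed

lemma sum_lemma:
  fixes m n :: nat
  shows "(\<Sum>i=0..m. (if i = 0 then 0 else G n (i + 1)) * G (m - i) 2)
    = (if 1 \<le> m \<and> 1 \<le> n then (\<Sum>j = 0..<m - 1. G (n - 1 + 1) (j + 2) * G (m - j - 1) 2) else 0)"
proof (cases m)
  case 0 then show ?thesis by simp
next
  case (Suc k)
  have "(\<Sum>i=0..m. (if i = 0 then 0 else G n (i + 1)) * G (m - i) 2)
      = (\<Sum>i=0..k. G n (i + 2) * G (k - i) 2)"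
    unfolding Suc atLeast0AtMost sum.atMost_Suc_shift by simp
  also have "\<dots> = (\<Sum>i=0..<k. G n (i + 2) * G (k - i) 2)"
    by (simp add: atLeastLessThanSuc_atLeastAtMost[symmetric] G0)
  finally show ?thesis using Suc by (cases n) (auto simp: G0)
qed

lemma B_eq: "(L1 * PP * g2b) $ m $ n
   = (if 1 \<le> m \<and> 1 \<le> n then (\<Sum>j = 0..<m - 1. G (n + 1 - 1) (j + 2) * G (m - j - 1) 2) else 0)"
proof -
  have "(L1 * PP * g2b) $ m $ n = (\<Sum>i=0..m. (L1 * PP) $ i $ n * p1 $ (m - i))"
    by (simp add: fps_mult_nth[of "L1 * PP" g2b] fps_sum_nth g2b_nth)
  also have "\<dots> = (\<Sum>i=0..m. (if i = 0 then 0 else G n (i + 1)) * G (m - i) 2)"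
    by (simp add: L1PP p1_nth)
  also have "\<dots> = (if 1 \<le> m \<and> 1 \<le> n then (\<Sum>j = 0..<m - 1. G (n - 1 + 1) (j + 2) * G (m - j - 1) 2) else 0)"
    by (rule sum_lemma)
  finally show ?thesis by (cases n) auto
qed

lemma X_nz: "bvX \<noteq> 0"
proof
  assume "bvX = 0" then have "bvX $ 1 $ 0 = 0" by simp
  then show False by (simp add: bvX_def)
qed

lemma Y_nz: "bvY \<noteq> 0"
proof
  assume "bvY = 0" then have "bvY $ 0 $ 1 = 0" by simp
  then show False by (simp add: bvY_def)
qed

lemma F_eq: "Abs_fps (\<lambda>m. Abs_fps (\<lambda>n. if 1 \<le> m \<and> 1 \<le> n then Gt m (n + 1) else 0))
   = PP * (L1 + M1 - 1)"
proof -
  have "Abs_fps (\<lambda>m. Abs_fps (\<lambda>n. if 1 \<le> m \<and> 1 \<le> n then Gt m (n + 1) else 0))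
     = M1 * PP + L1 * PP * g2b"
  proof (rule fps_ext, rule fps_ext)
    fix m n
    show "Abs_fps (\<lambda>m. Abs_fps (\<lambda>n. if 1 \<le> m \<and> 1 \<le> n then Gt m (n + 1) else 0)) $ m $ n
      = (M1 * PP + L1 * PP * g2b) $ m $ n"
      unfolding fps_add_nth M1PP B_eq by (simp add: Gt_def)
  qed
  also have "\<dots> = PP * M1 + PP * (g2b * L1)" by (simp add: algebra_simps)
  also have "\<dots> = PP * (L1 + M1 - 1)" unfolding g2b_L1 by (simp add: algebra_simps)
  finally show ?thesis .
qed

theorem lemma4p5:
  shows "(\<forall>m\<ge>1. Gt m 1 = G m 1 \<and> G m 1 = (-1) ^ (m - 1) / real m)
    \<and> Abs_fps (\<lambda>m. Abs_fps (\<lambda>n. if 1 \<le> m \<and> 1 \<le> n then Gt m (n + 1) else 0))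
        = bdiv (bvY * logX - bvX * logY) (logX - logY)
          * (bdiv (bvY * logX + bvX * logY) (bvX * bvY) - 1)
    \<and> (\<forall>m n. 1 \<le> m \<longrightarrow> 2 \<le> n \<longrightarrow> Gt m n = Gt (n - 1) (m + 1))"
proof (intro conjI allI impI)
  fix m :: nat assume m: "1 \<le> m"
  show "Gt m 1 = G m 1" by (simp add: Gt_def G0)
  show "G m 1 = (-1) ^ (m - 1) / real m" using m by (simp add: G1 ln1_def fps_ln_nth)
next
  have b1: "bdiv (bvY * logX - bvX * logY) (logX - logY) = PP"
    by (rule bdiv_eq[OF LM_nz PP_eq])
  have b2: "bdiv (bvY * logX + bvX * logY) (bvX * bvY) = L1 + M1"
    by (rule bdiv_eq) (simp_all add: X_nz Y_nz logX_eq logY_eq algebra_simps)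
  show "Abs_fps (\<lambda>m. Abs_fps (\<lambda>n. if 1 \<le> m \<and> 1 \<le> n then Gt m (n + 1) else 0))
        = bdiv (bvY * logX - bvX * logY) (logX - logY)
          * (bdiv (bvY * logX + bvX * logY) (bvX * bvY) - 1)"
    unfolding b1 b2 F_eq ..
next
  fix m n :: nat assume m: "1 \<le> m" and n: "2 \<le> n"
  define F where "F = Abs_fps (\<lambda>m. Abs_fps (\<lambda>n. if 1 \<le> m \<and> 1 \<le> n then Gt m (n + 1) else 0))"
  have "TT F = F" unfolding F_def F_eq
    by (simp add: TT_mult TT_add TT_diff TT_one TT_PP L1_def algebra_simps)
  then have "TT F $ m $ (n - 1) = F $ m $ (n - 1)" by simp
  moreover obtain k where k: "n = Suc (Suc k)" using n by (metis add_2_eq_Suc le_Suc_ex)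
  ultimately show "Gt m n = Gt (n - 1) (m + 1)" using m by (simp add: F_def)
qed

end
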